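(* Let $\Sigma$ be a real symmetric positive definite $n\times n$ matrix and let $D_0$ be the diagonal matrix with $[D_0]_{ii}=\dfrac{1}{2[\Sigma^{-1}]_{ii}}$, $i=1,\dots,n$. Let \[\mathcal S(\Sigma)=\{(\hat\Sigma,\tilde\Sigma)\mid \Sigma=\hat\Sigma+\tilde\Sigma,\ \hat\Sigma\ge0,\ \tilde\Sigma\ge 0,\ \tilde\Sigma\text{ diagonal}\},\] and let $(\hat\Sigma_{\rm opt},\tilde\Sigma_{\rm opt})$ be the (unique) maximizer over $\mathcal S(\Sigma)$ of $\operatorname{trace}(\hat\Sigma-\hat\Sigma\Sigma^{-1}\hat\Sigma)$ (equivalently, of $\min_{K\in\mathbb R^{n\times n}}L(K,\hat\Sigma,\tilde\Sigma)$, where $L(K,\hat\Sigma,\tilde\Sigma)=\operatorname{trace}(\hat\Sigma-K\hat\Sigma-\hat\Sigma K'+K(\hat\Sigma+\tilde\Sigma)K')$). If $\Sigma-D_0\ge 0$, then $\tilde\Sigma_{\rm opt}=D_0$ and $\hat\Sigma_{\rm opt}=\Sigma-D_0$. Otherwise, $\tilde\Sigma_{\rm opt}\le D_0$ and $\hat\Sigma_{\rm opt}$ is singular.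
   Context: All matrices are real symmetric $n\times n$ unless stated; $M\ge0$ means positive semidefinite and $A\le B$ means $B-A\ge 0$. $L$ is the trace of the mean-square error of the estimate $K\mathbf x$ of $\hat{\mathbf x}$ when $\mathbf x=\hat{\mathbf x}+\tilde{\mathbf x}$ with uncorrelated zero-mean components of covariances $\hat\Sigma,\tilde\Sigma$. *)

theory Defs
  imports "HOL-Analysis.Analysis"
begin

definition psd :: "real^'n^'n \<Rightarrow> bool" where
  "psd A \<longleftrightarrow> transpose A = A \<and> (\<forall>x. 0 \<le> x \<bullet> (A *v x))"

definition pd :: "real^'n^'n \<Rightarrow> bool" where
  "pd A \<longleftrightarrow> transpose A = A \<and> (\<forall>x. x \<noteq> 0 \<longrightarrow> 0 < x \<bullet> (A *v x))"

definition loewner_le :: "real^'n^'n \<Rightarrow> real^'n^'n \<Rightarrow> bool" where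
  "loewner_le A B \<longleftrightarrow> psd (B - A)"

definition diagonal_mat :: "real^'n^'n \<Rightarrow> bool" where
  "diagonal_mat A \<longleftrightarrow> (\<forall>i j. i \<noteq> j \<longrightarrow> A $ i $ j = 0)"

definition split_set :: "real^'n^'n \<Rightarrow> ((real^'n^'n) \<times> (real^'n^'n)) set" where
  "split_set S = {(Sh, St). S = Sh + St \<and> psd Sh \<and> psd St \<and> diagonal_mat St}"

definition objective :: "real^'n^'n \<Rightarrow> real^'n^'n \<Rightarrow> real" where
  "objective S Sh = trace (Sh - Sh ** matrix_inv S ** Sh)"

definition D0 :: "real^'n^'n \<Rightarrow> real^'n^'n" where
  "D0 S = (\<chi> i j. if i = j then 1 / (2 * (matrix_inv S $ i $ i)) else 0)"

end

theory Submission
  imports Defs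
begin

definition dg :: "('n \<Rightarrow> real) \<Rightarrow> real^'n^'n" where
  "dg d = (\<chi> i j. if i = j then d i else 0)"

lemma ifz_mult[simp]: "(if P then a else 0) * (b::real) = (if P then a * b else 0)"
  "(b::real) * (if P then a else 0) = (if P then b * a else 0)" by auto

lemma dg_nth[simp]: "dg d $ i $ j = (if i = j then d i else 0)"
  by (simp add: dg_def)

lemma diag_eq_dg: "diagonal_mat D \<Longrightarrow> D = dg (\<lambda>i. D$i$i)"
  by (auto simp: diagonal_mat_def vec_eq_iff)

lemma diagonal_dg: "diagonal_mat (dg d)"
  by (simp add: diagonal_mat_def)

lemma dg_mulv: "dg d *v x = (\<chi> i. d i * x$i)"
  by (simp add: vec_eq_iff matrix_vector_mult_def)

lemma quad_dg: "x \<bullet> (dg d *v x) = (\<Sum>i\<in>UNIV. d i * (x$i)^2)"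
  by (simp add: dg_mulv inner_vec_def power2_eq_square algebra_simps)

lemma transpose_dg: "transpose (dg d) = dg d"
  by (simp add: transpose_def vec_eq_iff)

lemma psd_dg: "(\<And>i. 0 \<le> d i) \<Longrightarrow> psd (dg d)"
  unfolding psd_def quad_dg transpose_dg
  by (auto intro!: sum_nonneg)

lemma psd_dg_nonneg: "psd (dg d) \<Longrightarrow> 0 \<le> d i"
proof -
  assume "psd (dg d)"
  then have "0 \<le> axis i 1 \<bullet> (dg d *v axis i 1)" unfolding psd_def by blast
  then show ?thesis by (simp add: dg_mulv inner_vec_def axis_def)
qed

lemma transpose_add': "transpose (A + B) = transpose A + (transpose B :: real^'n^'n)"
  by (simp add: transpose_def vec_eq_iff)
lemma transpose_diff': "transpose (A - B) = transpose A - (transpose B :: real^'n^'n)"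
  by (simp add: transpose_def vec_eq_iff)

lemma psd_add: "psd A \<Longrightarrow> psd B \<Longrightarrow> psd (A + B)"
  unfolding psd_def by (simp add: transpose_add' matrix_vector_mult_add_rdistrib inner_add_right add_nonneg_nonneg)

lemma dg_diff: "dg a - dg b = dg (\<lambda>i. a i - b i)"
  by (simp add: vec_eq_iff)

lemma mm_diff_l: "((A::real^'n^'n) - B) ** C = A ** C - B ** C"
  by (simp add: matrix_matrix_mult_def vec_eq_iff sum_subtractf algebra_simps)
lemma mm_diff_r: "(A::real^'n^'n) ** (B - C) = A ** B - A ** C"
  by (simp add: matrix_matrix_mult_def vec_eq_iff sum_subtractf algebra_simps)

lemma pd_invertible: "pd S \<Longrightarrow> invertible S"
proof -
  assume "pd S"
  then have "\<forall>x. S *v x = 0 \<longrightarrow> x = 0" unfolding pd_def by (metis inner_zero_right less_irrefl)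
  then show ?thesis using matrix_left_invertible_ker invertible_left_inverse by blast
qed

lemma inv_props: "invertible S \<Longrightarrow> S ** matrix_inv S = mat 1 \<and> matrix_inv S ** S = mat 1"
  unfolding invertible_def matrix_inv_def by (rule someI_ex)

lemma trace_dPd: "trace (dg d ** P ** dg d) = (\<Sum>i\<in>UNIV. P$i$i * (d i)^2)"
  by (simp add: trace_def matrix_matrix_mult_def power2_eq_square algebra_simps)

lemma obj_formula:
  assumes "invertible S"
  shows "objective S (S - dg d) = (\<Sum>i\<in>UNIV. d i - matrix_inv S $i$i * (d i)^2)"
proof -
  let ?P = "matrix_inv S" let ?D = "dg d"
  note ip = inv_props[OF assms]
  have "(S - ?D) ** ?P ** (S - ?D) = (mat 1 - ?D ** ?P) ** (S - ?D)"
    using ip by (simp add: mm_diff_l)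
  also have "\<dots> = S - ?D - ?D + ?D ** ?P ** ?D"
    using ip by (simp add: mm_diff_l mm_diff_r matrix_mul_assoc[symmetric])
  finally have e: "(S - ?D) ** ?P ** (S - ?D) = S - ?D - ?D + ?D ** ?P ** ?D" .
  have "objective S (S - ?D) = trace ?D - trace (?D ** ?P ** ?D)"
    unfolding objective_def e by (simp add: trace_sub trace_add)
  also have "\<dots> = (\<Sum>i\<in>UNIV. d i - matrix_inv S $i$i * (d i)^2)"
    unfolding trace_dPd by (simp add: sum_subtractf trace_def)
  finally show ?thesis .
qed

lemma diag_pos:
  assumes "pd S" shows "0 < matrix_inv S $ i $ i"
proof -
  let ?P = "matrix_inv S"
  note ip = inv_props[OF pd_invertible[OF assms]]
  define y where "y = ?P *v axis i 1"
  have Sy: "S *v y = axis i 1" using ip by (simp add: y_def matrix_vector_mul_assoc)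
  have "y \<noteq> 0" using Sy by (metis axis_nth matrix_vector_mult_0_right zero_index zero_neq_one)
  then have "0 < y \<bullet> (S *v y)" using assms unfolding pd_def by blast
  also have "y \<bullet> (S *v y) = y $ i" unfolding Sy by (simp add: inner_axis)
  also have "\<dots> = ?P $ i $ i"
    by (simp add: y_def matrix_vector_mult_def axis_def)
  finally show ?thesis .
qed

lemma sym_swap: "transpose A = A \<Longrightarrow> x \<bullet> (A *v y) = y \<bullet> ((A::real^'n^'n) *v x)"
  by (metis dot_lmul_matrix inner_commute transpose_matrix_vector)

lemma quad_disc:
  fixes a b c :: real
  assumes "0 \<le> a" "\<And>t. 0 \<le> c + 2*t*b + t^2 * a"
  shows "b^2 \<le> a * c"
proof (cases "a = 0")
  case True
  have "b = 0"
  proof (rule ccontr)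
    assume "b \<noteq> 0"
    have "0 \<le> c + 2*(-(c+1)/(2*b))*b + (-(c+1)/(2*b))^2 * a" by (rule assms(2))
    then show False using True \<open>b\<noteq>0\<close> by (simp add: field_simps)
  qed
  then show ?thesis using True by simp
next
  case False
  then have ap: "a > 0" using assms(1) by simp
  have "0 \<le> c + 2*(-b/a)*b + (-b/a)^2 * a" by (rule assms(2))
  then have "0 \<le> c - b^2/a" using ap by (simp add: field_simps power2_eq_square)
  then show ?thesis using ap by (simp add: field_simps)
qed

lemma psd_cs:
  assumes "psd A"
  shows "(y \<bullet> (A *v x))^2 \<le> (y \<bullet> (A *v y)) * (x \<bullet> (A *v (x::real^'n)))"
proof (rule quad_disc)
  show "0 \<le> y \<bullet> (A *v y)" using assms unfolding psd_def by blast
  fix t :: real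
  have s: "x \<bullet> (A *v y) = y \<bullet> (A *v x)" using assms unfolding psd_def by (metis sym_swap)
  have "0 \<le> (x + t *\<^sub>R y) \<bullet> (A *v (x + t *\<^sub>R y))" using assms unfolding psd_def by blast
  also have "\<dots> = x \<bullet> (A *v x) + 2*t*(y \<bullet> (A *v x)) + t^2 * (y \<bullet> (A *v y))"
    using s by (simp add: matrix_vector_right_distrib matrix_vector_mult_scaleR inner_add_left inner_add_right algebra_simps power2_eq_square)
  finally show "0 \<le> x \<bullet> (A *v x) + 2*t*(y \<bullet> (A *v x)) + t^2 * (y \<bullet> (A *v y))" .
qed

lemma g_max: "0 < (p::real) \<Longrightarrow> x - p * x^2 \<le> 1/(2*p) - p * (1/(2*p))^2"
  and g_max_strict: "0 < (p::real) \<Longrightarrow> x \<noteq> 1/(2*p) \<Longrightarrow> x - p * x^2 < 1/(2*p) - p * (1/(2*p))^2"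
proof -
  assume p: "0 < p"
  have e: "1/(2*p) - p * (1/(2*p))^2 - (x - p * x^2) = p * (x - 1/(2*p))^2"
    using p by (simp add: field_simps power2_eq_square)
  show "x - p * x^2 \<le> 1/(2*p) - p * (1/(2*p))^2" using e p by (smt (verit) mult_nonneg_nonneg zero_le_power2)
  assume "x \<noteq> 1/(2*p)"
  then have "0 < (x - 1/(2*p))^2" by simp
  then show "x - p * x^2 < 1/(2*p) - p * (1/(2*p))^2" using e p by (smt (verit) mult_pos_pos)
qed

lemma g_incr: "0 < (y - x) * (1 - p * (x + y)) \<Longrightarrow> x - p * x^2 < y - (p::real) * y^2"
proof -
  assume h: "0 < (y - x) * (1 - p * (x + y))"
  have "y - p * y^2 - (x - p * x^2) = (y - x) * (1 - p * (x + y))" by (simp add: algebra_simps power2_eq_square)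
  then show ?thesis using h by linarith
qed

lemma sum_upd_less:
  fixes g :: "'n::finite \<Rightarrow> real \<Rightarrow> real"
  assumes "g k (d k) < g k v"
  shows "(\<Sum>i\<in>UNIV. g i (d i)) < (\<Sum>i\<in>UNIV. g i ((d(k := v)) i))"
  by (rule sum_strict_mono_ex1) (use assms in auto)

theorem proposition11:
  fixes S Sh_opt St_opt :: "real^'n^'n"
  assumes "pd S"
    and "(Sh_opt, St_opt) \<in> split_set S"
    and "\<forall>(Sh, St) \<in> split_set S. objective S Sh \<le> objective S Sh_opt"
  shows "(psd (S - D0 S) \<longrightarrow> St_opt = D0 S \<and> Sh_opt = S - D0 S) \<and>
         (\<not> psd (S - D0 S) \<longrightarrow> loewner_le St_opt (D0 S) \<and> \<not> invertible Sh_opt)"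
proof -
  define p where "p i = matrix_inv S $ i $ i" for i
  define t where "t i = 1 / (2 * p i)" for i
  define g where "g i x = x - p i * x^2" for i x
  define J where "J d = (\<Sum>i\<in>UNIV. g i (d i))" for d
  have invS: "invertible S" using assms(1) by (rule pd_invertible)
  have pp: "0 < p i" for i unfolding p_def using assms(1) by (rule diag_pos)
  have tp: "0 < t i" for i using pp[of i] by (simp add: t_def)
  have D0e: "D0 S = dg t" by (simp add: D0_def dg_def t_def p_def vec_eq_iff)
  have obj: "objective S (S - dg d) = J d" for d
    unfolding obj_formula[OF invS] J_def g_def p_def ..
  from assms(2) have Sdec: "S = Sh_opt + St_opt" and psdSh: "psd Sh_opt" and psdSt: "psd St_opt"
    and diagSt: "diagonal_mat St_opt" by (auto simp: split_set_def)
  define d where "d = (\<lambda>i. St_opt $ i $ i)"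
  have St: "St_opt = dg d" using diag_eq_dg[OF diagSt] unfolding d_def .
  have Sh: "Sh_opt = S - dg d" using Sdec St by simp
  have dnn: "0 \<le> d i" for i using psdSt St psd_dg_nonneg by metis
  have opt: "J d' \<le> J d" if "psd (S - dg d')" "\<And>i. 0 \<le> d' i" for d'
  proof -
    have "(S - dg d', dg d') \<in> split_set S"
      using that by (auto simp: split_set_def psd_dg diagonal_dg)
    then have "objective S (S - dg d') \<le> objective S Sh_opt" using assms(3) by auto
    then show ?thesis unfolding Sh obj .
  qed
  have gmax: "g i x \<le> g i (t i)" for i x unfolding g_def t_def using g_max[OF pp] .
  have gmax_s: "x \<noteq> t i \<Longrightarrow> g i x < g i (t i)" for i x unfolding g_def t_def using g_max_strict[OF pp] by blast
  have part1: "St_opt = D0 S \<and> Sh_opt = S - D0 S" if h: "psd (S - D0 S)"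
  proof -
    have "J t \<le> J d" using opt[of t] h tp D0e by (simp add: less_imp_le)
    have "d = t"
    proof (rule ccontr)
      assume "d \<noteq> t"
      then obtain k where "d k \<noteq> t k" by auto
      have "J d < J t" unfolding J_def
      proof (rule sum_strict_mono_ex1)
        show "\<exists>a\<in>UNIV. g a (d a) < g a (t a)" using gmax_s \<open>d k \<noteq> t k\<close> by blast
      qed (use gmax in auto)
      with \<open>J t \<le> J d\<close> show False by simp
    qed
    then show ?thesis using St Sh D0e by simp
  qed
  have part2: "loewner_le St_opt (D0 S) \<and> \<not> invertible Sh_opt" if h: "\<not> psd (S - D0 S)"
  proof -
    have le: "d k \<le> t k" for k
    proof (rule ccontr)
      assume "\<not> d k \<le> t k"
      define d' where "d' = d(k := t k)"
      have "S - dg d' = Sh_opt + dg (\<lambda>i. d i - d' i)" unfolding Sh by (simp add: vec_eq_iff)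
      moreover have "psd (dg (\<lambda>i. d i - d' i))" using \<open>\<not> d k \<le> t k\<close> by (intro psd_dg) (simp add: d'_def)
      ultimately have "psd (S - dg d')" using psd_add psdSh by metis
      moreover have "0 \<le> d' i" for i using dnn tp by (simp add: d'_def less_imp_le)
      ultimately have "J d' \<le> J d" by (rule opt)
      moreover have "J d < J d'" unfolding J_def d'_def
        by (rule sum_upd_less) (use gmax_s \<open>\<not> d k \<le> t k\<close> in auto)
      ultimately show False by simp
    qed
    have loew: "loewner_le St_opt (D0 S)" unfolding loewner_le_def St D0e dg_diff
      using le by (intro psd_dg) simp
    have sing: "\<not> invertible Sh_opt"
    proof
      assume invSh: "invertible Sh_opt"
      obtain k where dk: "d k < t k"
      proof (rule ccontr)
        assume "\<not> thesis"
        then have "d = t" using le that by (metis ext order_less_le)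
        then show False using h Sh psdSh D0e by simp
      qed
      define y where "y = matrix_inv Sh_opt *v axis k 1"
      have Shy: "Sh_opt *v y = axis k 1"
        using inv_props[OF invSh] by (simp add: y_def matrix_vector_mul_assoc)
      define a where "a = y $ k"
      have symSh: "transpose Sh_opt = Sh_opt" using psdSh unfolding psd_def by blast
      have cs: "(x $ k)^2 \<le> a * (x \<bullet> (Sh_opt *v x))" for x
      proof -
        have "(y \<bullet> (Sh_opt *v x))^2 \<le> (y \<bullet> (Sh_opt *v y)) * (x \<bullet> (Sh_opt *v x))"
          by (rule psd_cs[OF psdSh])
        moreover have "y \<bullet> (Sh_opt *v x) = x $ k"
          using sym_swap[OF symSh, of y x] Shy by (simp add: inner_axis)
        moreover have "y \<bullet> (Sh_opt *v y) = a" using Shy by (simp add: inner_axis a_def)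
        ultimately show ?thesis by simp
      qed
      have a0: "0 \<le> a" using psdSh Shy unfolding psd_def a_def by (metis inner_axis inner_real_def mult.right_neutral)
      have "a \<noteq> 0" using cs[of "axis k 1"] by auto
      with a0 have apos: "0 < a" by simp
      define e where "e = min (1/a) (t k - d k)"
      have epos: "0 < e" using apos dk by (simp add: e_def)
      define d' where "d' = d(k := d k + e)"
      have Sd': "S - dg d' = Sh_opt - dg (\<lambda>i. if i = k then e else 0)"
        unfolding Sh by (simp add: vec_eq_iff d'_def)
      have "psd (Sh_opt - dg (\<lambda>i. if i = k then e else 0))"
        unfolding psd_def
      proof (intro conjI allI)
        show "transpose (Sh_opt - dg (\<lambda>i. if i = k then e else 0)) = Sh_opt - dg (\<lambda>i. if i = k then e else 0)"
          by (simp add: transpose_diff' transpose_dg symSh)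
        fix x
        have q: "x \<bullet> ((Sh_opt - dg (\<lambda>i. if i = k then e else 0)) *v x) = x \<bullet> (Sh_opt *v x) - e * (x$k)^2"
          by (simp add: matrix_vector_mult_diff_rdistrib inner_diff_right quad_dg)
        have "e * (x$k)^2 \<le> (1/a) * (x$k)^2" by (intro mult_right_mono) (auto simp: e_def)
        also have "\<dots> \<le> x \<bullet> (Sh_opt *v x)" using cs[of x] apos by (simp add: field_simps)
        finally show "0 \<le> x \<bullet> ((Sh_opt - dg (\<lambda>i. if i = k then e else 0)) *v x)" unfolding q by simp
      qed
      then have "psd (S - dg d')" using Sd' by simp
      moreover have "0 \<le> d' i" for i using dnn epos by (simp add: d'_def add_nonneg_nonneg less_imp_le)
      ultimately have "J d' \<le> J d" by (rule opt)
      moreover have "J d < J d'" unfolding J_def d'_def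
      proof (rule sum_upd_less)
        have "e \<le> t k - d k" by (simp add: e_def)
        then have "p k * (d k + (d k + e)) < p k * (2 * t k)"
          using dk pp[of k] by (intro mult_strict_left_mono) auto
        also have "p k * (2 * t k) = 1" using pp[of k] by (simp add: t_def)
        finally have "0 < 1 - p k * (d k + (d k + e))" by simp
        then have "0 < (d k + e - d k) * (1 - p k * (d k + (d k + e)))" using epos by simp
        then show "g k (d k) < g k (d k + e)" unfolding g_def by (rule g_incr)
      qed
      ultimately show False by simp
    qed
    show ?thesis using loew sing by blast
  qed
  show ?thesis using part1 part2 by blast
qed

end
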